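(* Let $q\in\mathbb{C}^\times$ be not a root of unity, $\varphi\in\mathbb{C}[x]^{\langle0\rangle}$, and let $v_0$ be a highest weight vector of the $U_q(\mathfrak{sl}_2^{\langle0\rangle}[x])$-module $L(\mathbf{u}^{\langle0\rangle}(\varphi))$. Then, as formal power series in $w$, $$\Psi^+(w)\cdot v_0=\beta_\varphi q^{\deg\varphi}\frac{\varphi^\flat(q^{-2}w)}{\varphi^\flat(w)}v_0.$$
   Context: $[k]=(q^k-q^{-k})/(q-q^{-1})$, $[x,y]=xy-yx$. $U_q(\mathfrak{sl}_2^{\langle0\rangle}[x])$ is the $\mathbb{C}$-algebra with generators $X^\pm_t,J_t$ ($t\ge0$), $K^\pm$ and relations: $K^+$ and all $J_t$ pairwise commute; $K^+K^-=1=K^-K^+$; $(K^-)^2=1-(q-q^{-1})J_0$; $X^\pm_{t+1}X^\pm_s-q^{\pm2}X^\pm_sX^\pm_{t+1}=q^{\pm2}X^\pm_tX^\pm_{s+1}-X^\pm_{s+1}X^\pm_t$; $K^+X^\pm_tK^-=q^{\pm2}X^\pm_t$; $q^{\pm2}J_0X^\pm_t-q^{\mp2}X^\pm_tJ_0=\pm[2]X^\pm_t$; $[J_{s+1},X^\pm_t]=q^{\pm2}J_sX^\pm_{t+1}-q^{\mp2}X^\pm_{t+1}J_s$; $[X^+_t,X^-_s]=K^+J_{s+t}$. $\Psi^+_0=K^+$, $\Psi^+_t=(q-q^{-1})K^+J_t$ ($t>0$), $\Psi^+(w)=\sum_{t\ge0}\Psi^+_tw^t$. $L(\mathbf{u})$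 for $\mathbf{u}=(\lambda,(u_t)_{t>0})$ is the simple module generated by $v_0$ with $X^+_tv_0=0$, $K^+v_0=\lambda v_0$, $J_tv_0=u_tv_0$ ($t>0$). $p_t(q)(x_1,\dots,x_k)=\sum_{\lambda\vdash t,\ell(\lambda)\le k}q^{-\ell(\lambda)}(q-q^{-1})^{\ell(\lambda)-1}m_\lambda(x_1,\dots,x_k)$. $\mathbb{C}[x]^{\langle0\rangle}$ is the set of $\varphi=\beta_\varphi(x-\gamma_1)\cdots(x-\gamma_k)$ with $\beta_\varphi=\pm1$; $\mathbf{u}^{\langle0\rangle}(\varphi)=(\beta_\varphi,(0)_{t>0})$ if $k=0$, $(\beta_\varphi q^k,(p_t(q)(\gamma_1,\dots,\gamma_k))_{t>0})$ if $k>0$. $\varphi^\flat(w)=(1-\gamma_1w)\cdots(1-\gamma_kw)$. *)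

theory Defs
  imports "HOL-Computational_Algebra.Formal_Power_Series" "HOL-Computational_Algebra.Polynomial" "HOL-Library.Multiset"
begin

definition qint :: "complex \<Rightarrow> nat \<Rightarrow> complex" where
  "qint q k = (q ^ k - inverse q ^ k) / (q - inverse q)"

(* A representation of U_q(sl_2^<0>[x]) on the complex vector space ('v, s):
   the generators X^+_t, X^-_t, J_t, K^+, K^- act by linear maps Xp t, Xm t, J t, Kp, Km
   satisfying the defining relations (stated pointwise on vectors). *)
definition uq_rep ::
  "complex \<Rightarrow> (complex \<Rightarrow> 'v::ab_group_add \<Rightarrow> 'v) \<Rightarrow> (nat \<Rightarrow> 'v \<Rightarrow> 'v) \<Rightarrow> (nat \<Rightarrow> 'v \<Rightarrow> 'v)
     \<Rightarrow> (nat \<Rightarrow> 'v \<Rightarrow> 'v) \<Rightarrow> ('v \<Rightarrow> 'v) \<Rightarrow> ('v \<Rightarrow> 'v) \<Rightarrow> bool" where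
  "uq_rep q s Xp Xm J Kp Km \<longleftrightarrow>
     vector_space s \<and>
     (\<forall>t. Vector_Spaces.linear s s (Xp t) \<and> Vector_Spaces.linear s s (Xm t)
          \<and> Vector_Spaces.linear s s (J t)) \<and>
     Vector_Spaces.linear s s Kp \<and> Vector_Spaces.linear s s Km \<and>
     (\<forall>t v. Kp (J t v) = J t (Kp v)) \<and>
     (\<forall>t r v. J t (J r v) = J r (J t v)) \<and>
     (\<forall>v. Kp (Km v) = v \<and> Km (Kp v) = v) \<and>
     (\<forall>v. Km (Km v) = v - s (q - inverse q) (J 0 v)) \<and>
     (\<forall>t r v. Xp (Suc t) (Xp r v) - s (q ^ 2) (Xp r (Xp (Suc t) v))
              = s (q ^ 2) (Xp t (Xp (Suc r) v)) - Xp (Suc r) (Xp t v)) \<and>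
     (\<forall>t r v. Xm (Suc t) (Xm r v) - s (inverse q ^ 2) (Xm r (Xm (Suc t) v))
              = s (inverse q ^ 2) (Xm t (Xm (Suc r) v)) - Xm (Suc r) (Xm t v)) \<and>
     (\<forall>t v. Kp (Xp t (Km v)) = s (q ^ 2) (Xp t v)) \<and>
     (\<forall>t v. Kp (Xm t (Km v)) = s (inverse q ^ 2) (Xm t v)) \<and>
     (\<forall>t v. s (q ^ 2) (J 0 (Xp t v)) - s (inverse q ^ 2) (Xp t (J 0 v)) = s (qint q 2) (Xp t v)) \<and>
     (\<forall>t v. s (inverse q ^ 2) (J 0 (Xm t v)) - s (q ^ 2) (Xm t (J 0 v)) = - s (qint q 2) (Xm t v)) \<and>
     (\<forall>r t v. J (Suc r) (Xp t v) - Xp t (J (Suc r) v)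
              = s (q ^ 2) (J r (Xp (Suc t) v)) - s (inverse q ^ 2) (Xp (Suc t) (J r v))) \<and>
     (\<forall>r t v. J (Suc r) (Xm t v) - Xm t (J (Suc r) v)
              = s (inverse q ^ 2) (J r (Xm (Suc t) v)) - s (q ^ 2) (Xm (Suc t) (J r v))) \<and>
     (\<forall>t r v. Xp t (Xm r v) - Xm r (Xp t v) = Kp (J (r + t) v))"

definition uq_submodule ::
  "(complex \<Rightarrow> 'v::ab_group_add \<Rightarrow> 'v) \<Rightarrow> (nat \<Rightarrow> 'v \<Rightarrow> 'v) \<Rightarrow> (nat \<Rightarrow> 'v \<Rightarrow> 'v)
     \<Rightarrow> (nat \<Rightarrow> 'v \<Rightarrow> 'v) \<Rightarrow> ('v \<Rightarrow> 'v) \<Rightarrow> ('v \<Rightarrow> 'v) \<Rightarrow> 'v set \<Rightarrow> bool" where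
  "uq_submodule s Xp Xm J Kp Km W \<longleftrightarrow>
     module.subspace s W \<and>
     (\<forall>w\<in>W. (\<forall>t. Xp t w \<in> W \<and> Xm t w \<in> W \<and> J t w \<in> W) \<and> Kp w \<in> W \<and> Km w \<in> W)"

definition uq_simple ::
  "complex \<Rightarrow> (complex \<Rightarrow> 'v::ab_group_add \<Rightarrow> 'v) \<Rightarrow> (nat \<Rightarrow> 'v \<Rightarrow> 'v) \<Rightarrow> (nat \<Rightarrow> 'v \<Rightarrow> 'v)
     \<Rightarrow> (nat \<Rightarrow> 'v \<Rightarrow> 'v) \<Rightarrow> ('v \<Rightarrow> 'v) \<Rightarrow> ('v \<Rightarrow> 'v) \<Rightarrow> bool" where
  "uq_simple q s Xp Xm J Kp Km \<longleftrightarrow>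
     uq_rep q s Xp Xm J Kp Km \<and> (\<exists>v::'v. v \<noteq> 0) \<and>
     (\<forall>W. uq_submodule s Xp Xm J Kp Km W \<longrightarrow> W = {0} \<or> W = UNIV)"

definition highest_weight_vector ::
  "(complex \<Rightarrow> 'v::ab_group_add \<Rightarrow> 'v) \<Rightarrow> (nat \<Rightarrow> 'v \<Rightarrow> 'v) \<Rightarrow> (nat \<Rightarrow> 'v \<Rightarrow> 'v) \<Rightarrow> ('v \<Rightarrow> 'v)
     \<Rightarrow> complex \<Rightarrow> (nat \<Rightarrow> complex) \<Rightarrow> 'v \<Rightarrow> bool" where
  "highest_weight_vector s Xp J Kp lam u v0 \<longleftrightarrow>
     v0 \<noteq> 0 \<and> (\<forall>t. Xp t v0 = 0) \<and> Kp v0 = s lam v0 \<and> (\<forall>t>0. J t v0 = s (u t) v0)"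

definition Psi_plus ::
  "complex \<Rightarrow> (complex \<Rightarrow> 'v \<Rightarrow> 'v) \<Rightarrow> (nat \<Rightarrow> 'v \<Rightarrow> 'v) \<Rightarrow> ('v \<Rightarrow> 'v) \<Rightarrow> nat \<Rightarrow> 'v \<Rightarrow> 'v" where
  "Psi_plus q s J Kp t v = (if t = 0 then Kp v else s (q - inverse q) (Kp (J t v)))"

(* partitions of t: multisets of positive integers summing to t; length = size *)
definition partitions_of :: "nat \<Rightarrow> nat multiset set" where
  "partitions_of t = {lam. (\<forall>n\<in>#lam. 0 < n) \<and> sum_mset lam = t}"

(* monomial symmetric polynomial m_lam(x_1,...,x_k), variables given as a list of length k:
   sum over exponent vectors (a_1..a_k) whose nonzero entries form the multiset lam *)
definition mono_sym :: "nat multiset \<Rightarrow> complex list \<Rightarrow> complex" where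
  "mono_sym lam xs =
     (\<Sum>a \<in> {a::nat \<Rightarrow> nat. (\<forall>i\<ge>length xs. a i = 0) \<and>
                filter_mset (\<lambda>n. n \<noteq> 0) (image_mset a (mset_set {..<length xs})) = lam}.
        \<Prod>i<length xs. (xs ! i) ^ a i)"

definition p_poly :: "complex \<Rightarrow> nat \<Rightarrow> complex list \<Rightarrow> complex" where
  "p_poly q t xs =
     (\<Sum>lam \<in> {lam \<in> partitions_of t. size lam \<le> length xs}.
        inverse q ^ size lam * (q - inverse q) ^ (size lam - 1) * mono_sym lam xs)"

(* phi = beta (x - g_1)...(x - g_k) is encoded by beta and the list gs = [g_1,...,g_k] *)
definition phi_poly :: "complex \<Rightarrow> complex list \<Rightarrow> complex poly" where
  "phi_poly beta gs = smult beta (\<Prod>g\<leftarrow>gs. [:- g, 1:])"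

(* u^<0>(phi): the K^+-eigenvalue and the J_t-eigenvalues (t>0) *)
definition u0_lambda :: "complex \<Rightarrow> complex \<Rightarrow> complex list \<Rightarrow> complex" where
  "u0_lambda q beta gs = (if gs = [] then beta else beta * q ^ length gs)"

definition u0_J :: "complex \<Rightarrow> complex list \<Rightarrow> nat \<Rightarrow> complex" where
  "u0_J q gs t = (if gs = [] then 0 else p_poly q t gs)"

(* phi^flat(c w) = (1 - g_1 c w)...(1 - g_k c w) as a formal power series in w *)
definition phi_flat :: "complex list \<Rightarrow> complex \<Rightarrow> complex fps" where
  "phi_flat gs c = (\<Prod>g\<leftarrow>gs. 1 - fps_const (g * c) * fps_X)"

end

theory Submission
  imports Defs
begin

definition Aset :: "nat \<Rightarrow> nat \<Rightarrow> (nat \<Rightarrow> nat) set" where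
  "Aset k t = {f. (\<forall>i\<ge>k. f i = 0) \<and> (\<Sum>i<k. f i) = t}"

lemma finite_Aset: "finite (Aset k t)"
proof (rule finite_subset)
  show "Aset k t \<subseteq> {f. \<forall>x. (x \<in> {..<k} \<longrightarrow> f x \<in> {..t}) \<and> (x \<notin> {..<k} \<longrightarrow> f x = 0)}"
  proof -
    have "f x \<le> t" if f: "f \<in> Aset k t" and x: "x < k" for f x
    proof -
      have "f x \<le> (\<Sum>i<k. f i)" using x by (intro member_le_sum) auto
      then show ?thesis using f by (auto simp: Aset_def)
    qed
    then show ?thesis by (auto simp: Aset_def)
  qed
  show "finite {f. \<forall>x. (x \<in> {..<k} \<longrightarrow> f x \<in> {..t}) \<and> (x \<notin> {..<k} \<longrightarrow> f x = (0::nat))}"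
    by (rule finite_set_of_finite_funs) auto
qed

lemma Aset_0: "Aset 0 t = (if t = 0 then {\<lambda>_. 0} else {})"
  by (auto simp: Aset_def)

lemma fps_prod_nth:
  fixes F :: "nat \<Rightarrow> 'a::comm_ring_1 fps"
  shows "fps_nth (\<Prod>i<k. F i) t = (\<Sum>f\<in>Aset k t. \<Prod>i<k. fps_nth (F i) (f i))"
proof (induction k arbitrary: t)
  case 0
  then show ?case by (simp add: Aset_0)
next
  case (Suc k)
  have "fps_nth (\<Prod>i<Suc k. F i) t = (\<Sum>j=0..t. fps_nth (\<Prod>i<k. F i) j * fps_nth (F k) (t - j))"
    by (simp add: fps_mult_nth)
  also have "\<dots> = (\<Sum>j=0..t. \<Sum>f\<in>Aset k j. (\<Prod>i<k. fps_nth (F i) (f i)) * fps_nth (F k) (t - j))"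
    by (simp add: Suc.IH sum_distrib_right)
  also have "\<dots> = (\<Sum>p\<in>Sigma {0..t} (Aset k). (\<Prod>i<k. fps_nth (F i) (snd p i)) * fps_nth (F k) (t - fst p))"
    by (subst sum.Sigma) (auto simp: finite_Aset case_prod_beta)
  also have "\<dots> = (\<Sum>g\<in>Aset (Suc k) t. \<Prod>i<Suc k. fps_nth (F i) (g i))"
  proof (rule sum.reindex_bij_witness[where i = "\<lambda>g. (t - g k, g(k := 0))" and j = "\<lambda>p. (snd p)(k := t - fst p)"])
    fix p assume p: "p \<in> Sigma {0..t} (Aset k)"
    then have fk: "snd p k = 0" and sm: "(\<Sum>i<k. snd p i) = fst p" and le: "fst p \<le> t"
      by (auto simp: Aset_def)
    show "(t - ((snd p)(k := t - fst p)) k, ((snd p)(k := t - fst p))(k := 0)) = p"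
      using fk le by (cases p) auto
    have "(\<Sum>i<k. ((snd p)(k := t - fst p)) i) = (\<Sum>i<k. snd p i)" by (intro sum.cong) auto
    then show "(snd p)(k := t - fst p) \<in> Aset (Suc k) t"
      using p sm le by (auto simp: Aset_def)
    have "(\<Prod>i<k. fps_nth (F i) (((snd p)(k := t - fst p)) i)) = (\<Prod>i<k. fps_nth (F i) (snd p i))" by (intro prod.cong) auto
    then show "(\<Prod>i<Suc k. fps_nth (F i) (((snd p)(k := t - fst p)) i)) = (\<Prod>i<k. fps_nth (F i) (snd p i)) * fps_nth (F k) (t - fst p)"
      by simp
  next
    fix g assume g: "g \<in> Aset (Suc k) t"
    then have sm: "(\<Sum>i<k. g i) + g k = t" and z: "\<forall>i\<ge>Suc k. g i = 0" by (auto simp: Aset_def)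
    show "(snd (t - g k, g(k := 0)))(k := t - fst (t - g k, g(k := 0))) = g" using sm by auto
    have "(\<Sum>i<k. (g(k := 0)) i) = (\<Sum>i<k. g i)" by (intro sum.cong) auto
    then show "(t - g k, g(k := 0)) \<in> Sigma {0..t} (Aset k)"
      using sm z by (auto simp: Aset_def)
  qed
  finally show ?case .
qed


lemma lin_scale: "Vector_Spaces.linear s s f \<Longrightarrow> f (s c v) = s c (f v)"
  by (simp add: module_hom.scale module_hom_linearI)

lemma vs_scale: "vector_space s \<Longrightarrow> s a (s b v) = s (a * b) v"
  by (metis vector_space_def mult.commute)

lemma mem_le_sum_mset: "x \<in># M \<Longrightarrow> x \<le> sum_mset (M::nat multiset)"
  using multi_member_split by force

definition E :: "complex \<Rightarrow> complex \<Rightarrow> complex fps" where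
  "E c x = Abs_fps (\<lambda>n. if n = 0 then 1 else (1 - c) * x ^ n)"

lemma E_mult: "E c x * (1 - fps_const x * fps_X) = 1 - fps_const (x * c) * fps_X"
proof -
  have eq: "E c x * (1 - fps_const x * fps_X) = E c x - fps_const x * (fps_X * E c x)"
    by (simp add: algebra_simps)
  have "fps_nth (E c x - fps_const x * (fps_X * E c x)) n = fps_nth (1 - fps_const (x * c) * fps_X) n" for n
  proof (cases n)
    case 0 then show ?thesis by (simp add: E_def fps_X_mult_nth)
  next
    case (Suc m)
    then show ?thesis
      by (cases m) (auto simp: E_def fps_X_mult_nth algebra_simps)
  qed
  then show ?thesis unfolding eq fps_eq_iff by blast
qed

lemma phi_flat_prod: "phi_flat gs c = (\<Prod>i<length gs. 1 - fps_const (gs ! i * c) * fps_X)"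
  by (simp add: phi_flat_def prod.list_conv_set_nth atLeast0LessThan)

lemma phi_flat_0: "fps_nth (phi_flat gs c) 0 = 1"
  by (induction gs) (simp_all add: phi_flat_def)

lemma phi_flat_ratio: "phi_flat gs c / phi_flat gs 1 = (\<Prod>i<length gs. E c (gs ! i))"
proof -
  have "phi_flat gs c = (\<Prod>i<length gs. E c (gs ! i) * (1 - fps_const (gs ! i) * fps_X))"
    unfolding phi_flat_prod by (simp add: E_mult)
  also have "\<dots> = (\<Prod>i<length gs. E c (gs ! i)) * phi_flat gs 1"
    unfolding phi_flat_prod by (simp add: prod.distrib)
  finally have A: "phi_flat gs c = (\<Prod>i<length gs. E c (gs ! i)) * phi_flat gs 1" .
  have "phi_flat gs c / phi_flat gs 1 = phi_flat gs c * inverse (phi_flat gs 1)"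
    by (rule fps_divide_unit) (simp add: phi_flat_0)
  also have "\<dots> = (\<Prod>i<length gs. E c (gs ! i)) * (phi_flat gs 1 * inverse (phi_flat gs 1))"
    unfolding A by (simp add: mult.assoc)
  also have "phi_flat gs 1 * inverse (phi_flat gs 1) = 1"
    by (rule inverse_mult_eq_1') (simp add: phi_flat_0)
  finally show ?thesis by simp
qed

lemma E_prod_nth:
  "fps_nth (\<Prod>i<k. E c (xs ! i)) t =
     (\<Sum>f\<in>Aset k t. (1 - c) ^ card {i\<in>{..<k}. f i \<noteq> 0} * (\<Prod>i<k. (xs ! i) ^ f i))"
proof -
  have "(\<Prod>i<k. fps_nth (E c (xs ! i)) (f i)) = (1 - c) ^ card {i\<in>{..<k}. f i \<noteq> 0} * (\<Prod>i<k. (xs ! i) ^ f i)"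
    for f :: "nat \<Rightarrow> nat"
  proof -
    have "(\<Prod>i<k. fps_nth (E c (xs ! i)) (f i)) = (\<Prod>i<k. (if f i \<noteq> 0 then 1 - c else 1) * (xs ! i) ^ f i)"
      by (intro prod.cong) (auto simp: E_def)
    also have "\<dots> = (\<Prod>i<k. (if f i \<noteq> 0 then 1 - c else 1)) * (\<Prod>i<k. (xs ! i) ^ f i)"
      by (simp add: prod.distrib)
    also have "(\<Prod>i<k. (if f i \<noteq> 0 then 1 - c else 1)) = (\<Prod>i\<in>{i\<in>{..<k}. f i \<noteq> 0}. 1 - c)"
      by (rule prod.inter_filter[symmetric]) simp
    also have "\<dots> = (1 - c) ^ card {i\<in>{..<k}. f i \<noteq> 0}"
      by (rule prod_constant)
    finally show ?thesis by simp
  qed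
  then show ?thesis by (simp add: fps_prod_nth)
qed

definition gmap :: "nat \<Rightarrow> (nat \<Rightarrow> nat) \<Rightarrow> nat multiset" where
  "gmap k f = filter_mset (\<lambda>n. n \<noteq> 0) (image_mset f (mset_set {..<k}))"

lemma gmap_alt: "gmap k f = image_mset f (mset_set {i\<in>{..<k}. f i \<noteq> 0})"
  unfolding gmap_def image_mset_filter_mset_swap[symmetric] filter_mset_mset_set[OF finite_lessThan] by (rule refl)

lemma size_gmap: "size (gmap k f) = card {i\<in>{..<k}. f i \<noteq> 0}"
  by (simp add: gmap_alt)

lemma sum_gmap: "sum_mset (gmap k f) = (\<Sum>i<k. f i)"
proof -
  have "sum_mset (gmap k f) = sum f {i\<in>{..<k}. f i \<noteq> 0}"
    by (simp add: gmap_alt sum_unfold_sum_mset)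
  also have "\<dots> = (\<Sum>i<k. f i)"
  proof -
    have "sum f {i\<in>{..<k}. f i \<noteq> 0} = (\<Sum>i<k. if f i \<noteq> 0 then f i else 0)"
      by (rule sum.inter_filter) simp
    also have "\<dots> = (\<Sum>i<k. f i)" by (rule sum.cong) auto
    finally show ?thesis .
  qed
  finally show ?thesis .
qed

lemma pos_gmap: "n \<in># gmap k f \<Longrightarrow> 0 < n"
  by (auto simp: gmap_def)

definition Pset :: "nat \<Rightarrow> nat \<Rightarrow> nat multiset set" where
  "Pset t k = {lam \<in> partitions_of t. size lam \<le> k}"

lemma finite_Pset: "finite (Pset t k)"
proof (rule finite_subset)
  show "Pset t k \<subseteq> (\<Union>n\<in>{..k}. multisets_of_size {..t} n)"
  proof
    fix lam assume lam: "lam \<in> Pset t k"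
    then have sz: "size lam \<in> {..k}" and st: "sum_mset lam = t"
      by (simp_all add: Pset_def partitions_of_def)
    have "set_mset lam \<subseteq> {..t}"
    proof
      fix x assume "x \<in> set_mset lam"
      then have "x \<le> sum_mset lam" by (intro mem_le_sum_mset) simp
      then show "x \<in> {..t}" using st by simp
    qed
    then have "lam \<in> multisets_of_size {..t} (size lam)" by (simp add: multisets_of_size_def)
    then show "lam \<in> (\<Union>n\<in>{..k}. multisets_of_size {..t} n)" using sz by blast
  qed
  show "finite (\<Union>n\<in>{..k}. multisets_of_size {..t} n)" by auto
qed

lemma mono_sym_alt:
  assumes "lam \<in> Pset t (length xs)"
  shows "mono_sym lam xs = (\<Sum>f\<in>{f\<in>Aset (length xs) t. gmap (length xs) f = lam}. \<Prod>i<length xs. (xs ! i) ^ f i)"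
proof -
  have "{a::nat \<Rightarrow> nat. (\<forall>i\<ge>length xs. a i = 0) \<and>
                filter_mset (\<lambda>n. n \<noteq> 0) (image_mset a (mset_set {..<length xs})) = lam}
        = {f\<in>Aset (length xs) t. gmap (length xs) f = lam}"
  proof (intro Set.set_eqI iffI)
    fix a assume "a \<in> {a::nat \<Rightarrow> nat. (\<forall>i\<ge>length xs. a i = 0) \<and>
                filter_mset (\<lambda>n. n \<noteq> 0) (image_mset a (mset_set {..<length xs})) = lam}"
    then have z: "\<forall>i\<ge>length xs. a i = 0" and g: "gmap (length xs) a = lam"
      by (simp_all add: gmap_def)
    have "sum_mset lam = t" using assms by (simp add: Pset_def partitions_of_def)
    then have "(\<Sum>i<length xs. a i) = t" using sum_gmap[of "length xs" a] g by simp
    then show "a \<in> {f\<in>Aset (length xs) t. gmap (length xs) f = lam}"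
      using z g by (simp add: Aset_def)
  next
    fix a assume "a \<in> {f\<in>Aset (length xs) t. gmap (length xs) f = lam}"
    then have z: "\<forall>i\<ge>length xs. a i = 0" and g: "gmap (length xs) a = lam"
      by (simp_all add: Aset_def)
    then show "a \<in> {a::nat \<Rightarrow> nat. (\<forall>i\<ge>length xs. a i = 0) \<and>
                filter_mset (\<lambda>n. n \<noteq> 0) (image_mset a (mset_set {..<length xs})) = lam}"
      by (simp add: gmap_def)
  qed
  then show ?thesis unfolding mono_sym_def by simp
qed

lemma scalar_id:
  assumes "(q::complex) \<noteq> 0" "l > 0"
  shows "(q - inverse q) * (inverse q ^ l * (q - inverse q) ^ (l - 1)) = (1 - inverse q ^ 2) ^ l"
proof -
  obtain m where l: "l = Suc m" using assms(2) by (cases l) auto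
  have "(q - inverse q) * (inverse q ^ l * (q - inverse q) ^ (l - 1)) = ((q - inverse q) * inverse q) ^ l"
    by (simp add: l power_mult_distrib)
  also have "(q - inverse q) * inverse q = 1 - inverse q ^ 2"
    using assms(1) by (simp add: algebra_simps power2_eq_square)
  finally show ?thesis .
qed

lemma p_poly_comb:
  assumes q: "(q::complex) \<noteq> 0" and t: "t > 0"
  shows "(q - inverse q) * p_poly q t xs =
     (\<Sum>f\<in>Aset (length xs) t. (1 - inverse q ^ 2) ^ card {i\<in>{..<length xs}. f i \<noteq> 0} * (\<Prod>i<length xs. (xs ! i) ^ f i))"
proof -
  let ?k = "length xs"
  let ?c = "1 - inverse q ^ 2"
  let ?h = "\<lambda>f. ?c ^ card {i\<in>{..<?k}. f i \<noteq> 0} * (\<Prod>i<?k. (xs ! i) ^ f i)"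
  have "(q - inverse q) * p_poly q t xs
      = (\<Sum>lam\<in>Pset t ?k. (q - inverse q) * (inverse q ^ size lam * (q - inverse q) ^ (size lam - 1)) * mono_sym lam xs)"
    unfolding p_poly_def Pset_def by (simp add: sum_distrib_left mult.assoc)
  also have "\<dots> = (\<Sum>lam\<in>Pset t ?k. \<Sum>f\<in>{f\<in>Aset ?k t. gmap ?k f = lam}. ?h f)"
  proof (rule sum.cong[OF refl])
    fix lam assume lam: "lam \<in> Pset t ?k"
    have ne: "lam \<noteq> {#}" using lam t by (auto simp: Pset_def partitions_of_def)
    then have "size lam > 0" by (simp add: nonempty_has_size)
    then have "(q - inverse q) * (inverse q ^ size lam * (q - inverse q) ^ (size lam - 1)) = ?c ^ size lam"
      using scalar_id q by blast
    moreover have "?c ^ size lam * mono_sym lam xs = (\<Sum>f\<in>{f\<in>Aset ?k t. gmap ?k f = lam}. ?h f)"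
      unfolding mono_sym_alt[OF lam] sum_distrib_left
    proof (intro sum.cong refl)
      fix f assume "f \<in> {f\<in>Aset ?k t. gmap ?k f = lam}"
      then have "size lam = card {i\<in>{..<?k}. f i \<noteq> 0}" using size_gmap[of ?k f] by auto
      then show "?c ^ size lam * (\<Prod>i<?k. (xs ! i) ^ f i) = ?h f" by (simp only:)
    qed
    ultimately show "(q - inverse q) * (inverse q ^ size lam * (q - inverse q) ^ (size lam - 1)) * mono_sym lam xs
       = (\<Sum>f\<in>{f\<in>Aset ?k t. gmap ?k f = lam}. ?h f)" by simp
  qed
  also have "\<dots> = (\<Sum>f\<in>Aset ?k t. ?h f)"
  proof (rule sum.group[OF finite_Aset finite_Pset])
    show "gmap ?k ` Aset ?k t \<subseteq> Pset t ?k"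
    proof
      fix lam assume "lam \<in> gmap ?k ` Aset ?k t"
      then obtain f where f: "f \<in> Aset ?k t" and lam: "lam = gmap ?k f" by auto
      have "card {i\<in>{..<?k}. f i \<noteq> 0} \<le> ?k"
        by (metis (no_types, lifting) card_lessThan card_mono finite_lessThan mem_Collect_eq subsetI)
      then show "lam \<in> Pset t ?k"
        using f pos_gmap[of _ ?k f] sum_gmap[of ?k f]
        by (auto simp: lam Pset_def partitions_of_def size_gmap Aset_def)
    qed
  qed
  finally show ?thesis .
qed


lemma Aset_k0: "Aset k 0 = {\<lambda>_. 0}"
  by (auto simp: Aset_def fun_eq_iff) (metis lessThan_iff not_le)

lemma degree_phi: "beta \<noteq> 0 \<Longrightarrow> degree (phi_poly beta gs) = length gs"
proof -
  have "degree (\<Prod>g\<leftarrow>gs. [:- g, 1:]) = length gs \<and> (\<Prod>g\<leftarrow>gs. [:- g, 1:]) \<noteq> (0::complex poly)"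
  proof (induction gs)
    case Nil then show ?case by simp
  next
    case (Cons g gs)
    let ?P = "\<Prod>g\<leftarrow>gs. [:- g, 1:]"
    have d: "degree ([:-g,1:] * ?P) = Suc (length gs)" using Cons.IH by (subst degree_mult_eq) auto
    have n: "[:-g,1:] * ?P \<noteq> 0" using Cons.IH by (simp only: mult_eq_0_iff) auto
    show ?case unfolding list.map(2) prod_list.Cons using d n by simp
  qed
  moreover assume "beta \<noteq> 0"
  ultimately show ?thesis by (simp add: phi_poly_def)
qed

lemma u0_J_eq: "t > 0 \<Longrightarrow> u0_J q gs t = p_poly q t gs"
proof -
  assume t: "t > 0"
  have "{lam \<in> partitions_of t. size lam \<le> length ([]::complex list)} = {}"
    using t by (auto simp: partitions_of_def)
  then have "p_poly q t [] = 0" by (simp only: p_poly_def sum.empty)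
  then show ?thesis by (auto simp: u0_J_def)
qed

theorem mainTheorem10:
  fixes q beta :: complex and gs :: "complex list"
    and s :: "complex \<Rightarrow> 'v::ab_group_add \<Rightarrow> 'v"
    and Xp Xm J :: "nat \<Rightarrow> 'v \<Rightarrow> 'v" and Kp Km :: "'v \<Rightarrow> 'v" and v0 :: 'v
  assumes q_nz: "q \<noteq> 0"
    and q_not_root: "\<forall>n>0. q ^ n \<noteq> 1"
    and beta: "beta = 1 \<or> beta = -1"
    and simple: "uq_simple q s Xp Xm J Kp Km"
    and hwv: "highest_weight_vector s Xp J Kp (u0_lambda q beta gs) (u0_J q gs) v0"
  shows "\<forall>t. Psi_plus q s J Kp t v0 =
           s (fps_nth (fps_const (beta * q ^ degree (phi_poly beta gs))
                        * phi_flat gs (inverse q ^ 2) / phi_flat gs 1) t) v0"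
proof
  fix t
  let ?k = "length gs"
  let ?L = "beta * q ^ ?k"
  have rep: "uq_rep q s Xp Xm J Kp Km" using simple by (simp add: uq_simple_def)
  then have vs: "vector_space s" and linK: "Vector_Spaces.linear s s Kp"
    by (simp_all add: uq_rep_def)
  have bnz: "beta \<noteq> 0" using beta by auto
  have lam: "u0_lambda q beta gs = ?L" by (simp add: u0_lambda_def)
  have Kv: "Kp v0 = s ?L v0" using hwv lam by (simp add: highest_weight_vector_def)
  have Jv: "J t v0 = s (u0_J q gs t) v0" if "t > 0" for t
    using hwv that by (simp add: highest_weight_vector_def)
  have deg: "degree (phi_poly beta gs) = ?k" using degree_phi[OF bnz] .
  have B0: "fps_nth (phi_flat gs 1) 0 \<noteq> 0" by (simp add: phi_flat_0)
  have "fps_const ?L * phi_flat gs (inverse q ^ 2) / phi_flat gs 1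
        = fps_const ?L * (phi_flat gs (inverse q ^ 2) / phi_flat gs 1)"
    by (simp add: fps_divide_unit[OF B0] mult.assoc)
  also have "\<dots> = fps_const ?L * (\<Prod>i<?k. E (inverse q ^ 2) (gs ! i))"
    by (simp add: phi_flat_ratio)
  finally have R: "fps_nth (fps_const ?L * phi_flat gs (inverse q ^ 2) / phi_flat gs 1) t
     = ?L * (\<Sum>f\<in>Aset ?k t. (1 - inverse q ^ 2) ^ card {i\<in>{..<?k}. f i \<noteq> 0} * (\<Prod>i<?k. (gs ! i) ^ f i))"
    by (simp add: E_prod_nth)
  show "Psi_plus q s J Kp t v0 =
           s (fps_nth (fps_const (beta * q ^ degree (phi_poly beta gs))
                        * phi_flat gs (inverse q ^ 2) / phi_flat gs 1) t) v0"
  proof (cases "t = 0")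
    case True
    then show ?thesis unfolding deg R by (simp add: Psi_plus_def Kv Aset_k0)
  next
    case False
    then have t: "t > 0" by simp
    have "Psi_plus q s J Kp t v0 = s (q - inverse q) (Kp (s (p_poly q t gs) v0))"
      using False Jv[OF t] u0_J_eq[OF t] by (simp add: Psi_plus_def)
    also have "\<dots> = s (?L * ((q - inverse q) * p_poly q t gs)) v0"
      by (simp add: lin_scale[OF linK] Kv vs_scale[OF vs] algebra_simps)
    finally show ?thesis unfolding deg R p_poly_comb[OF q_nz t] .
  qed
qed

end
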